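(* For every horizontal parallelogram $P$ with $\operatorname{height}(P)=1$ and $\operatorname{width}(P)\le 1$, there exists a box type $T$ such that a translate of $P$ is contained in $T$ and $\operatorname{area}(T)\le 6\operatorname{area}(P)$.
   Context: For a compact set $S\subset\mathbb R^2$, $\operatorname{width}(S)=\max_{p,q\in S}|x(p)-x(q)|$ and $\operatorname{height}(S)=\max_{p,q\in S}|y(p)-y(q)|$. A horizontal parallelogram is one with a pair of horizontal edges (its bottom and top edges). Box types: the $0$-dimensional (basic) box type $[\,]$ is a $2\times 1$ axis-parallel rectangle. Given a $d$-dimensional box type $T=[x_1,\dots,x_d]\in\{-1,0,+1\}^d$, which is a horizontal parallelogram of height $1$ with bottom edge $b$ and top edge $t$, partition $b$ into three equally long segments $b_{-1},b_0,b_{+1}$ (left to right) and likewise $t$ into $t_{-1},t_0,t_{+1}$; for $x_{d+1}\in\{-1,0,+1\}$ the $(d+1)$-dimensional box type $T\oplus[x_{d+1}]$ is the parallelogram with bottom edge $b_0$ and top edge $t_{x_{d+1}}$. A $d$-dimensional box type has horizontal edges of length $2\cdot 3^{-d}$. *)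

theory Defs
  imports "HOL-Analysis.Analysis"
begin

definition width :: "(real \<times> real) set \<Rightarrow> real" where
  "width S = (SUP p\<in>S. SUP q\<in>S. \<bar>fst p - fst q\<bar>)"

definition height :: "(real \<times> real) set \<Rightarrow> real" where
  "height S = (SUP p\<in>S. SUP q\<in>S. \<bar>snd p - snd q\<bar>)"

definition area :: "(real \<times> real) set \<Rightarrow> real" where
  "area S = measure lebesgue S"

definition hpar :: "real \<Rightarrow> real \<Rightarrow> real \<Rightarrow> real \<Rightarrow> real \<Rightarrow> (real \<times> real) set" where
  "hpar a y0 L s h = convex hull {(a, y0), (a + L, y0), (a + s, y0 + h), (a + s + L, y0 + h)}"

definition horizontal_parallelogram :: "(real \<times> real) set \<Rightarrow> bool" where
  "horizontal_parallelogram P \<longleftrightarrow> (\<exists>a y0 L s h. L > 0 \<and> h > 0 \<and> P = hpar a y0 L s h)"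

text \<open>A box type of height 1 is described by the triple (b, t, L):
  bottom edge [b, b+L] \<times> {0}, top edge [t, t+L] \<times> {1}.  The basic box type is
  the rectangle [0,2] \<times> [0,1] (a fixed representative; only translates matter).
  Refinement T \<oplus> [x]: bottom edge becomes the middle third b_0 of the bottom edge,
  top edge becomes the third t_x of the top edge.\<close>
definition box_step :: "real \<times> real \<times> real \<Rightarrow> int \<Rightarrow> real \<times> real \<times> real" where
  "box_step T x = (case T of (b, t, L) \<Rightarrow> (b + L / 3, t + (of_int x + 1) * L / 3, L / 3))"

definition box_params :: "int list \<Rightarrow> real \<times> real \<times> real" where
  "box_params xs = foldl box_step (0, 0, 2) xs"

definition box_type :: "int list \<Rightarrow> (real \<times> real) set" where
  "box_type xs = (case box_params xs of (b, t, L) \<Rightarrow> hpar b 0 L (t - b) 1)"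

definition is_box_type :: "(real \<times> real) set \<Rightarrow> bool" where
  "is_box_type T \<longleftrightarrow> (\<exists>xs. set xs \<subseteq> {-1, 0, 1} \<and> T = box_type xs)"

end

theory Submission
  imports Defs
begin

definition pset :: "real \<Rightarrow> real \<Rightarrow> real \<Rightarrow> real \<Rightarrow> real \<Rightarrow> (real \<times> real) set" where
  "pset a y0 L s h = {p. y0 \<le> snd p \<and> snd p \<le> y0 + h \<and> a*h + s*(snd p - y0) \<le> fst p * h \<and> fst p * h \<le> (a+L)*h + s*(snd p - y0)}"

lemma pset_convex: "convex (pset a y0 L s h)"
proof -
  have "pset a y0 L s h = {p. inner (0,-1) p \<le> -y0} \<inter> {p. inner (0,1) p \<le> y0+h}
     \<inter> {p. inner (-h, s) p \<le> -a*h + s*y0} \<inter> {p. inner (h, -s) p \<le> (a+L)*h - s*y0}"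
    by (auto simp: pset_def inner_prod_def algebra_simps; smt (verit))
  then show ?thesis by (simp add: convex_Int convex_halfspace_le)
qed

lemma pset_closed: "closed (pset a y0 L s h)"
  unfolding pset_def
  by (intro closed_Collect_conj closed_Collect_le continuous_intros)

lemma hpar_eq:
  assumes "h > 0" "L \<ge> 0"
  shows "hpar a y0 L s h = pset a y0 L s h"
proof
  show "hpar a y0 L s h \<subseteq> pset a y0 L s h"
    unfolding hpar_def
  proof (rule hull_minimal)
    show "{(a, y0), (a + L, y0), (a + s, y0 + h), (a + s + L, y0 + h)} \<subseteq> pset a y0 L s h"
      using assms by (auto simp: pset_def algebra_simps)
  qed (rule pset_convex)
next
  show "pset a y0 L s h \<subseteq> hpar a y0 L s h"
  proof
    fix p assume p: "p \<in> pset a y0 L s h"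
    obtain x y where xy: "p = (x,y)" by (cases p)
    define t where "t = (y - y0)/h"
    have t01: "0 \<le> t" "t \<le> 1" using p assms by (auto simp: xy t_def pset_def)
    have yt: "y = y0 + t*h" using assms by (simp add: t_def)
    let ?H = "hpar a y0 L s h"
    have cv: "convex ?H" unfolding hpar_def by simp
    have P1: "(a,y0) \<in> ?H" "(a+L,y0) \<in> ?H" "(a+s,y0+h) \<in> ?H" "(a+s+L,y0+h) \<in> ?H"
      unfolding hpar_def by (simp_all add: hull_inc)
    have l: "(a + s*t, y) \<in> ?H"
      using closed_segment_subset[OF P1(1) P1(3) cv] t01
      by (force simp: in_segment yt algebra_simps)
    have r: "(a + L + s*t, y) \<in> ?H"
      using closed_segment_subset[OF P1(2) P1(4) cv] t01
      by (force simp: in_segment yt algebra_simps)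
    have A: "h*(a+s*t) \<le> h*x" "h*x \<le> h*(a+L+s*t)"
      using p by (auto simp: xy pset_def yt algebra_simps)
    then have B: "a+s*t \<le> x" "x \<le> a+L+s*t" using assms(1) by (simp_all add: mult_le_cancel_left_pos)
    have "(x,y) \<in> closed_segment (a + s*t, y) (a + L + s*t, y)"
    proof (cases "L = 0")
      case True
      then show ?thesis using B by auto
    next
      case False
      then have Lp: "L > 0" using assms by simp
      show ?thesis unfolding in_segment
        by (rule exI[of _ "(x - (a+s*t))/L"]) (use B Lp in \<open>auto simp: field_simps\<close>)
    qed
    then show "p \<in> ?H" using closed_segment_subset[OF l r cv] xy by auto
  qed
qed

lemma area_hpar:
  assumes "h > 0" "L \<ge> 0"
  shows "area (hpar a y0 L s h) = L * h"
proof -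
  let ?S = "pset a y0 L s h"
  have Sb: "?S \<in> sets borel" by (rule borel_closed[OF pset_closed])
  have Sb2: "?S \<in> sets (lborel \<Otimes>\<^sub>M lborel)" using Sb by (simp only: lborel_prod sets_lborel)
  have sec: "(\<lambda>x. (x, y)) -` ?S = (if y0 \<le> y \<and> y \<le> y0 + h then {a + s*(y-y0)/h .. a + s*(y-y0)/h + L} else {})" for y
    using assms by (auto simp: pset_def field_simps)
  have sec2: "emeasure lborel ((\<lambda>x. (x, y)) -` ?S) = ennreal L * indicator {y0..y0+h} y" for y
    using assms by (simp add: sec indicator_def)
  have "emeasure lborel ?S = emeasure (lborel \<Otimes>\<^sub>M lborel) ?S" by (simp add: lborel_prod)
  also have "\<dots> = (\<integral>\<^sup>+y. emeasure lborel ((\<lambda>x. (x, y)) -` ?S) \<partial>lborel)"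
    by (rule lborel_pair.emeasure_pair_measure_alt2[OF Sb2])
  also have "\<dots> = (\<integral>\<^sup>+y. ennreal L * indicator {y0..y0+h} y \<partial>lborel)" by (simp add: sec2)
  also have "\<dots> = ennreal L * ennreal h" using assms
    by (simp add: nn_integral_cmult_indicator)
  also have "\<dots> = ennreal (L*h)" using assms by (simp add: ennreal_mult)
  finally have E: "emeasure lborel ?S = ennreal (L*h)" .
  have "area (hpar a y0 L s h) = measure lborel ?S"
    using assms Sb by (simp add: area_def hpar_eq)
  also have "\<dots> = L*h" using E assms by (simp add: measure_def)
  finally show ?thesis .
qed

lemma pset_mem:
  assumes "p \<in> pset a y0 L s h" "h > 0"
  shows "\<exists>t. 0 \<le> t \<and> t \<le> 1 \<and> snd p = y0 + t*h \<and> a + s*t \<le> fst p \<and> fst p \<le> a + L + s*t"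
proof -
  define t where "t = (snd p - y0)/h"
  have yt: "snd p = y0 + t*h" using assms by (simp add: t_def)
  have A: "h*(a+s*t) \<le> h*fst p" "h*fst p \<le> h*(a+L+s*t)"
    using assms(1) by (auto simp: pset_def yt algebra_simps)
  then have B: "a+s*t \<le> fst p" "fst p \<le> a+L+s*t" using assms(2) by (simp_all add: mult_le_cancel_left_pos)
  have "0 \<le> t" "t \<le> 1" using assms by (auto simp: t_def pset_def)
  then show ?thesis using B yt by blast
qed

lemma sup2_le:
  fixes f :: "'a \<Rightarrow> 'a \<Rightarrow> real"
  assumes "S \<noteq> {}" "\<And>p q. p \<in> S \<Longrightarrow> q \<in> S \<Longrightarrow> f p q \<le> B"
  shows "(SUP p\<in>S. SUP q\<in>S. f p q) \<le> B"
  using assms by (intro cSUP_least) auto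

lemma sup2_ge:
  fixes f :: "'a \<Rightarrow> 'a \<Rightarrow> real"
  assumes "p \<in> S" "q \<in> S" "\<And>p q. p \<in> S \<Longrightarrow> q \<in> S \<Longrightarrow> f p q \<le> B"
  shows "f p q \<le> (SUP p\<in>S. SUP q\<in>S. f p q)"
proof -
  have b1: "bdd_above (f p ` S)" if "p \<in> S" for p using assms that by (intro bdd_aboveI2[where M=B]) auto
  have b3: "f p q \<le> (SUP q\<in>S. f p q)" using assms b1 by (intro cSUP_upper) auto
  have b2: "bdd_above ((\<lambda>p. SUP q\<in>S. f p q) ` S)"
    using assms by (intro bdd_aboveI2[where M=B]) (auto intro!: cSUP_least)
  show ?thesis by (rule cSUP_upper2[OF b2 assms(1) b3])
qed

lemma hp_height_width:
  assumes "h > 0" "L > 0"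
  shows "height (hpar a y0 L s h) = h" "L + \<bar>s\<bar> \<le> width (hpar a y0 L s h)"
proof -
  let ?H = "hpar a y0 L s h"
  have Hp: "?H = pset a y0 L s h" using assms by (simp add: hpar_eq)
  have P1: "(a,y0) \<in> ?H" "(a+L,y0) \<in> ?H" "(a+s,y0+h) \<in> ?H" "(a+s+L,y0+h) \<in> ?H"
    unfolding hpar_def by (simp_all add: hull_inc)
  have hb: "\<bar>snd p - snd q\<bar> \<le> h" if pq: "p \<in> ?H" "q \<in> ?H" for p q
  proof -
    obtain t1 where t1: "0 \<le> t1" "t1 \<le> 1" "snd p = y0 + t1*h"
      using pset_mem[of p a y0 L s h] pq assms Hp by auto
    obtain t2 where t2: "0 \<le> t2" "t2 \<le> 1" "snd q = y0 + t2*h"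
      using pset_mem[of q a y0 L s h] pq assms Hp by auto
    have "snd p - snd q = h * (t1 - t2)" using t1 t2 by (simp add: algebra_simps)
    then have "\<bar>snd p - snd q\<bar> = h * \<bar>t1 - t2\<bar>" using assms by (simp add: abs_mult)
    also have "\<dots> \<le> h * 1" using t1 t2 assms by (intro mult_left_mono) auto
    finally show ?thesis by simp
  qed
  have wb: "\<bar>fst p - fst q\<bar> \<le> L + \<bar>s\<bar>" if pq: "p \<in> ?H" "q \<in> ?H" for p q
  proof -
    obtain t1 where t1: "0 \<le> t1" "t1 \<le> 1" "a + s*t1 \<le> fst p" "fst p \<le> a + L + s*t1"
      using pset_mem[of p a y0 L s h] pq assms Hp by auto
    obtain t2 where t2: "0 \<le> t2" "t2 \<le> 1" "a + s*t2 \<le> fst q" "fst q \<le> a + L + s*t2"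
      using pset_mem[of q a y0 L s h] pq assms Hp by auto
    have "\<bar>s*t1 - s*t2\<bar> \<le> \<bar>s\<bar>"
    proof -
      have "\<bar>s*t1 - s*t2\<bar> = \<bar>s\<bar> * \<bar>t1 - t2\<bar>" by (metis abs_mult right_diff_distrib)
      also have "\<dots> \<le> \<bar>s\<bar> * 1" using t1 t2 by (intro mult_left_mono) auto
      finally show ?thesis by simp
    qed
    then show ?thesis using t1 t2 by (auto simp: abs_le_iff)
  qed
  have "height ?H \<le> h" unfolding height_def using P1 hb by (intro sup2_le) auto
  moreover have "\<bar>snd (a,y0) - snd (a+s,y0+h)\<bar> \<le> height ?H"
    unfolding height_def by (rule sup2_ge[OF P1(1) P1(3) hb])
  ultimately show "height ?H = h" using assms by simp
  have w1: "\<bar>fst (a,y0) - fst (a+s+L,y0+h)\<bar> \<le> width ?H"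
    unfolding width_def by (rule sup2_ge[OF P1(1) P1(4) wb])
  have w2: "\<bar>fst (a+L,y0) - fst (a+s,y0+h)\<bar> \<le> width ?H"
    unfolding width_def by (rule sup2_ge[OF P1(2) P1(3) wb])
  show "L + \<bar>s\<bar> \<le> width ?H" using w1 w2 assms by (auto simp: abs_if split: if_splits)
qed

lemma bp_snoc: "box_params (xs @ [x]) = box_step (box_params xs) x"
  by (simp add: box_params_def)

lemma bp_len: "snd (snd (box_params xs)) = 2 / 3 ^ length xs"
proof (induction xs rule: rev_induct)
  case Nil then show ?case by (simp add: box_params_def)
next
  case (snoc x xs)
  then show ?case by (cases "box_params xs") (simp add: bp_snoc box_step_def)
qed

definition off :: "int list \<Rightarrow> real" where
  "off xs = fst (snd (box_params xs)) - fst (box_params xs)"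

lemma off_snoc: "off (xs @ [x]) = off xs + of_int x * 2 / 3 ^ (length xs + 1)"
  using bp_len[of xs] by (cases "box_params xs") (simp add: off_def bp_snoc box_step_def field_simps)

lemma covering:
  "\<bar>s\<bar> \<le> 1 \<Longrightarrow> \<exists>xs. length xs = d \<and> set xs \<subseteq> {-1,0,1} \<and> \<bar>s - off xs\<bar> \<le> 1 / 3^d"
proof (induction d)
  case 0
  then show ?case by (intro exI[of _ "[]"]) (simp add: off_def box_params_def)
next
  case (Suc d)
  then obtain xs where xs: "length xs = d" "set xs \<subseteq> {-1,0,1}" "\<bar>s - off xs\<bar> \<le> 1 / 3^d" by blast
  define q :: real where "q = 1 / 3^(d+1)"
  have q: "1/3^d = 3*q" "q > 0" by (simp_all add: q_def)
  define r where "r = s - off xs"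
  have r: "\<bar>r\<bar> \<le> 3*q" using xs q by (simp add: r_def)
  define x :: int where "x = (if r > q then 1 else if r < -q then -1 else 0)"
  have "\<bar>s - off (xs @ [x])\<bar> \<le> q"
    using r q by (simp add: off_snoc xs(1) flip: q_def r_def) (auto simp: x_def r_def abs_le_iff)
  moreover have "set (xs @ [x]) \<subseteq> {-1,0,1}" using xs by (auto simp: x_def)
  ultimately show ?case using xs by (intro exI[of _ "xs @ [x]"]) (simp add: q_def)
qed

lemma exists_d:
  assumes "0 < L" "L \<le> (1::real)"
  shows "\<exists>d::nat. 1/3^(d+1) < L \<and> L \<le> 1/3^d"
proof -
  have ex: "\<exists>n::nat. (1/3::real)^n < L" using assms by (intro real_arch_pow_inv) auto
  define n where "n = (LEAST n::nat. (1/3::real)^n < L)"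
  have n1: "(1/3::real)^n < L" unfolding n_def by (rule LeastI_ex[OF ex])
  have n0: "n \<noteq> 0" using n1 assms by (cases n) auto
  then obtain d where d: "n = Suc d" by (cases n) auto
  have "\<not> (1/3::real)^d < L" using not_less_Least[of d "\<lambda>n. (1/3::real)^n < L"] d n_def by auto
  then show ?thesis using n1 d by (intro exI[of _ d]) (auto simp: power_divide)
qed

theorem lemma15:
  fixes P :: "(real \<times> real) set"
  assumes "horizontal_parallelogram P"
    and "height P = 1"
    and "width P \<le> 1"
  shows "\<exists>T v. is_box_type T \<and> (\<lambda>p. p + v) ` P \<subseteq> T \<and> area T \<le> 6 * area P"
proof -
  obtain a y0 L s h where Lh: "L > 0" "h > 0" and P: "P = hpar a y0 L s h"
    using assms(1) unfolding horizontal_parallelogram_def by blast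
  have h1: "h = 1" using hp_height_width(1)[OF Lh(2) Lh(1)] assms(2) P by simp
  have w0: "L + \<bar>s\<bar> \<le> width (hpar a y0 L s h)" by (rule hp_height_width(2)[OF Lh(2) Lh(1)])
  have w: "L + \<bar>s\<bar> \<le> 1" using w0 assms(3) P by simp
  obtain d :: nat where d: "1/3^(d+1) < L" "L \<le> 1/3^d" using exists_d[of L] Lh w by (smt (verit) abs_ge_zero)
  obtain xs where xs: "length xs = d" "set xs \<subseteq> {-1,0,1}" "\<bar>s - off xs\<bar> \<le> 1/3^d"
  proof -
    have "\<bar>s\<bar> \<le> 1" using w Lh by simp
    then show ?thesis using covering[of s d] that by blast
  qed
  obtain b t l where btl: "box_params xs = (b,t,l)" by (cases "box_params xs")
  have l: "l = 2/3^d" using bp_len[of xs] btl xs(1) by simp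
  have offe: "off xs = t - b" using btl by (simp add: off_def)
  define T where "T = box_type xs"
  have isT: "is_box_type T" using xs(2) by (auto simp: is_box_type_def T_def)
  have lpos: "l \<ge> 0" using l by simp
  have TH: "T = hpar b 0 l (t-b) 1" using btl by (simp add: T_def box_type_def)
  have Tp: "T = pset b 0 l (t-b) 1" using TH hpar_eq[of 1 l] lpos by simp
  have areaT: "area T = l" using TH area_hpar[of 1 l] lpos by simp
  have areaP: "area P = L" using P h1 area_hpar[of 1 L] Lh by simp
  define e where "e = s - (t - b)"
  have e: "\<bar>e\<bar> \<le> 1/3^d" using xs(3) offe by (simp add: e_def)
  define m where "m = max 0 (-e)"
  define v where "v = (b + m - a, - y0)"
  have cvT: "convex T" using TH by (simp add: hpar_def)
  have img: "(\<lambda>p. p + v) ` P = convex hull ((\<lambda>p. v + p) ` {(a, y0), (a + L, y0), (a + s, y0 + h), (a + s + L, y0 + h)})"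
  proof -
    have eqf: "(\<lambda>p. p + v) = (\<lambda>p. v + p)" by (rule ext) (simp add: add.commute)
    show ?thesis unfolding P hpar_def eqf by (rule convex_hull_translation[symmetric])
  qed
  have q3: "1/3^(d+1) = (1/3^d) / (3::real)" by simp
  have sub: "(\<lambda>p. p + v) ` P \<subseteq> T"
    unfolding img
  proof (rule hull_minimal[where S=convex])
    show "(\<lambda>p. v + p) ` {(a, y0), (a + L, y0), (a + s, y0 + h), (a + s + L, y0 + h)} \<subseteq> T"
      using e d l h1 unfolding Tp pset_def v_def m_def e_def by (auto simp: abs_le_iff)
  qed (rule cvT)
  have six: "2/3^d = 6 * (1/3^(d+1) :: real)" by simp
  have aT: "area T = 6 * (1/3^(d+1) :: real)" using areaT l six by (simp only:)
  have "area T \<le> 6 * area P" using aT areaP d(1) by linarith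
  then show ?thesis using isT sub by blast
qed

end
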